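(* Let $m$ be a positive even integer, and for $z\in\{0,1\}$ let $\mathcal G_z$ be the uniform distribution over $\textsc{GapOr}_m^{-1}(z)$. For every conjunction $C\colon\{0,1\}^m\to\{0,1\}$: (i) $C(\mathcal G_0)\in\{0,1\}$; (ii) if $C(\mathcal G_0)=1$ and $C$ has width $w\le m/4$, then $C(\mathcal G_1)\ge 3^{-w}$.
   Context: $\textsc{GapOr}_m\colon\{0,1\}^m\to\{0,1\}$ is the partial function with value $0$ on the all-zeros input and value $1$ on inputs of Hamming weight $m/2$ (undefined otherwise). A conjunction is an AND of literals; its width is its number of literals. For a conjunction $C$ and distribution $\mathcal D$, $C(\mathcal D)=\Pr_{x\sim\mathcal D}[C(x)=1]$. *)

theory Defs
  imports "HOL-Probability.Probability"
begin

text \<open>Inputs in {0,1}^m are boolean lists of length m (True = 1).\<close>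

definition hamming_weight :: "bool list \<Rightarrow> nat" where
  "hamming_weight x = length (filter id x)"

definition gapor_preimage :: "nat \<Rightarrow> bool \<Rightarrow> bool list set" where
  "gapor_preimage m z =
     (if z then {x. length x = m \<and> hamming_weight x = m div 2}
      else {x. length x = m \<and> hamming_weight x = 0})"

definition G :: "nat \<Rightarrow> bool \<Rightarrow> bool list pmf" where
  "G m z = pmf_of_set (gapor_preimage m z)"

text \<open>A conjunction is a finite set of literals (i, b), meaning x_i = b; its width is the
  number of literals.\<close>
type_synonym conj = "(nat \<times> bool) set"

definition conj_wf :: "nat \<Rightarrow> conj \<Rightarrow> bool" where
  "conj_wf m C \<longleftrightarrow> finite C \<and> (\<forall>(i, b) \<in> C. i < m)"

definition conj_eval :: "conj \<Rightarrow> bool list \<Rightarrow> bool" where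
  "conj_eval C x \<longleftrightarrow> (\<forall>(i, b) \<in> C. x ! i = b)"

definition width :: "conj \<Rightarrow> nat" where
  "width C = card C"

text \<open>C(D) = Pr_{x ~ D}[C(x) = 1].\<close>
definition conj_prob :: "conj \<Rightarrow> bool list pmf \<Rightarrow> real" where
  "conj_prob C D = measure_pmf.prob D {x. conj_eval C x}"

end

theory Submission
  imports Defs
begin

lemma count_lists:
  assumes S: "S \<subseteq> {0..<m}"
  shows "card {x. length x = m \<and> hamming_weight x = k \<and> (\<forall>i\<in>S. \<not> x ! i)}
         = (m - card S) choose k"
proof -
  let ?f = "\<lambda>T. map (\<lambda>i. i \<in> T) [0..<m]"
  let ?U = "{T. T \<subseteq> {0..<m} - S \<and> card T = k}"
  have hw: "hamming_weight (?f T) = card T" if "T \<subseteq> {0..<m}" for T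
  proof -
    have "hamming_weight (?f T) = length (filter (\<lambda>i. i \<in> T) [0..<m])"
      by (simp add: hamming_weight_def filter_map o_def)
    also have "\<dots> = card (set (filter (\<lambda>i. i \<in> T) [0..<m]))"
      by (rule distinct_card[symmetric]) simp
    also have "set (filter (\<lambda>i. i \<in> T) [0..<m]) = T" using that by auto
    finally show ?thesis .
  qed
  have inj: "inj_on ?f ?U"
  proof (rule inj_onI)
    fix T1 T2 assume a: "T1 \<in> ?U" "T2 \<in> ?U" "?f T1 = ?f T2"
    show "T1 = T2"
    proof (rule set_eqI)
      fix i
      show "i \<in> T1 \<longleftrightarrow> i \<in> T2"
      proof (cases "i < m")
        case True
        show ?thesis using a(3) True by simp
      next
        case False then show ?thesis using a(1,2) by auto
      qed
    qed
  qed
  have img: "{x. length x = m \<and> hamming_weight x = k \<and> (\<forall>i\<in>S. \<not> x ! i)} = ?f ` ?U"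
  proof (rule set_eqI, rule iffI)
    fix x assume x: "x \<in> {x. length x = m \<and> hamming_weight x = k \<and> (\<forall>i\<in>S. \<not> x ! i)}"
    let ?T = "{i. i < m \<and> x ! i}"
    have e: "x = ?f ?T" using x by (intro nth_equalityI) auto
    have "hamming_weight (?f ?T) = card ?T" by (rule hw) auto
    hence "card ?T = k" using x e by simp
    moreover have "?T \<subseteq> {0..<m} - S" using x by auto
    ultimately show "x \<in> ?f ` ?U" using e by blast
  next
    fix x assume "x \<in> ?f ` ?U"
    then obtain T where T: "T \<in> ?U" "x = ?f T" by blast
    then show "x \<in> {x. length x = m \<and> hamming_weight x = k \<and> (\<forall>i\<in>S. \<not> x ! i)}"
      using hw[of T] S by (auto simp: subset_iff)
  qed
  have "card (?f ` ?U) = card ?U" using inj by (rule card_image)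
  also have "\<dots> = card ({0..<m} - S) choose k" by (rule n_subsets) simp
  also have "card ({0..<m} - S) = m - card S" using S
    by (simp add: card_Diff_subset finite_subset)
  finally show ?thesis using img by simp
qed

lemma binom_bound:
  fixes n w :: nat
  shows "2 * w \<le> n \<Longrightarrow> (2*n) choose n \<le> 3 ^ w * ((2*n - w) choose n)"
proof (induction w)
  case 0 then show ?case by simp
next
  case (Suc w)
  let ?a = "2*n - w"
  have IH: "(2*n) choose n \<le> 3 ^ w * (?a choose n)" using Suc by simp
  have abs: "(?a - n) * (?a choose n) = ?a * ((?a - 1) choose n)"
    by (rule binomial_absorb_comp)
  have "?a * (?a choose n) \<le> 3 * (?a - n) * (?a choose n)"
    using Suc.prems by (intro mult_right_mono) auto
  also have "\<dots> = ?a * (3 * ((?a - 1) choose n))" using abs by simp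
  finally have "?a choose n \<le> 3 * ((?a - 1) choose n)"
    using Suc.prems by (subst (asm) mult_le_cancel1) auto
  hence "3 ^ w * (?a choose n) \<le> 3 ^ w * (3 * ((?a - 1) choose n))" by simp
  moreover have "?a - 1 = 2*n - Suc w" by simp
  ultimately have "3 ^ w * (?a choose n) \<le> 3 ^ Suc w * ((2*n - Suc w) choose n)" by simp
  then show ?case using IH by linarith
qed

theorem fact3p3:
  fixes m :: nat and C :: conj
  assumes "m > 0" and "even m" and "conj_wf m C"
  shows "conj_prob C (G m False) \<in> {0, 1} \<and>
         (conj_prob C (G m False) = 1 \<and> real (width C) \<le> real m / 4 \<longrightarrow>
          conj_prob C (G m True) \<ge> 3 powr (- real (width C)))"
proof -
  have pre0: "gapor_preimage m False = {replicate m False}"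
  proof (rule set_eqI, rule iffI)
    fix x assume "x \<in> gapor_preimage m False"
    hence "length x = m" "filter id x = []" by (auto simp: gapor_preimage_def hamming_weight_def)
    thus "x \<in> {replicate m False}"
      by (auto simp: filter_empty_conv intro!: replicate_eqI)
  qed (simp add: gapor_preimage_def hamming_weight_def)
  have p0: "conj_prob C (G m False) = (if conj_eval C (replicate m False) then 1 else 0)"
    by (simp add: conj_prob_def G_def pre0 pmf_of_set_singleton indicator_def)
  show ?thesis
  proof (intro conjI impI)
    show "conj_prob C (G m False) \<in> {0, 1}" using p0 by simp
  next
    assume h: "conj_prob C (G m False) = 1 \<and> real (width C) \<le> real m / 4"
    have ev: "conj_eval C (replicate m False)" using h p0 by (auto split: if_splits)
    have wf: "finite C" "\<And>i b. (i, b) \<in> C \<Longrightarrow> i < m" using assms(3) by (auto simp: conj_wf_def)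
    have allF: "\<And>i b. (i, b) \<in> C \<Longrightarrow> b = False"
      using ev wf(2) by (fastforce simp: conj_eval_def)
    define S where "S = fst ` C"
    have CS: "C = (\<lambda>i. (i, False)) ` S" unfolding S_def
      using allF by force
    have cardS: "width C = card S" unfolding width_def CS
      by (rule card_image) (simp add: inj_on_def)
    have Ssub: "S \<subseteq> {0..<m}" using wf(2) unfolding S_def by force
    obtain n where n: "m = 2 * n" using assms(2) by blast
    define A where "A = gapor_preimage m True"
    have A: "A = {x. length x = m \<and> hamming_weight x = n \<and> (\<forall>i\<in>{}. \<not> x ! i)}"
      by (simp add: A_def gapor_preimage_def n)
    have cA: "card A = m choose n" using count_lists[of "{}" m n] A by simp
    have cApos: "card A > 0" using cA n by simp
    hence finA: "finite A" "A \<noteq> {}" using card_gt_0_iff by blast+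
    have evS: "A \<inter> {x. conj_eval C x} = {x. length x = m \<and> hamming_weight x = n \<and> (\<forall>i\<in>S. \<not> x ! i)}"
      unfolding A CS by (auto simp: conj_eval_def)
    have cE: "card (A \<inter> {x. conj_eval C x}) = (m - card S) choose n"
      using count_lists[OF Ssub] evS by simp
    have prob: "conj_prob C (G m True) = real ((m - card S) choose n) / real (m choose n)"
      unfolding conj_prob_def G_def A_def[symmetric]
      using measure_pmf_of_set[OF finA(2) finA(1)] cE cA by simp
    have w2: "2 * card S \<le> n" using h cardS n by simp
    have bb: "real (m choose n) \<le> 3 ^ card S * real ((m - card S) choose n)"
      using binom_bound[OF w2] n by (metis of_nat_le_iff of_nat_mult of_nat_power of_nat_numeral)
    have pos: "real (m choose n) > 0" using cA cApos by simp
    have "3 powr (- real (card S)) = 1 / 3 ^ card S"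
      by (simp add: powr_minus powr_realpow divide_inverse)
    also have "\<dots> \<le> real ((m - card S) choose n) / real (m choose n)"
      using bb pos by (simp add: field_simps)
    finally show "conj_prob C (G m True) \<ge> 3 powr (- real (width C))"
      using prob cardS by simp
  qed
qed

end
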